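(* Let $V$ be as defined in the context. Then $V$ has the same distribution as $\sum_{i=1}^{K}Y_i$, where: - $K$ is Poisson with mean $\frac{\theta}{(1-q)\gamma}$; - $Y_1,Y_2,\dots$ are i.i.d. and independent of $K$, each distributed as the size at an independent time $X\sim\mathrm{Exp}(\delta)$ of a linear birth–death process with rates $\alpha,\beta$ started from one cell. In particular $\mathbb{E}[\varphi_X(z)]=1-(1-q)\,{}_2F_1(1,\gamma;1+\gamma;\xi(z))$, where $\varphi_s(z)=1-\frac{1-q}{1-\xi(z)e^{-\lambda s}}$ is the probability generating function of the birth–death process at time $s$. Equivalently, $$\log\mathbb{E}[z^V]=\frac{\theta}{(1-q)\gamma}\int_0^\infty(\varphi_t(z)-1)\,\delta e^{-\delta t}\,dt .$$
   Context: Fix $\delta>0$ and $\alpha>\beta\ge0$, put $\lambda=\alpha-\beta$, $q=\beta/\alpha$, $\gamma=\delta/\lambda$, and fix $\theta>0$. Let $\xi(z)=\frac{q-z}{1-z}$. Let $V$ be a random variable on $\{0,1,\dots\}$ with $\log\mathbb{E}[z^V]=-\frac{\theta}{\gamma}{}_2F_1(1,\gamma;1+\gamma;\xi(z))$ for $z\in[0,1)$, where ${}_2F_1$ is the Gauss hypergeometric function. (This $V$ is the distributional limit of the total mutant count as $N\to\infty$, $\nu=\alpha\theta/N$, in the model where the wild type is $e^{\delta t}$ and mutants appear at Poisson rate $\nu e^{\delta t}$.) *)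

theory Defs
  imports "HOL-Probability.Probability"
begin

definition hyp2F1_series :: "real \<Rightarrow> real \<Rightarrow> real \<Rightarrow> real \<Rightarrow> real" where
  "hyp2F1_series a b c x =
     (\<Sum>n. pochhammer a n * pochhammer b n / (pochhammer c n * fact n) * x ^ n)"

text \<open>Gauss hypergeometric function on the real half-line x < 1: the series for
  abs x < 1, and its analytic continuation via the Pfaff transformation
  F(a,b;c;x) = (1-x)^(-a) F(a,c-b;c;x/(x-1)) for x \<le> -1 (then x/(x-1) lies in [1/2,1)).\<close>
definition hyp2F1 :: "real \<Rightarrow> real \<Rightarrow> real \<Rightarrow> real \<Rightarrow> real" where
  "hyp2F1 a b c x =
     (if \<bar>x\<bar> < 1 then hyp2F1_series a b c x
      else if x < 0 then (1 - x) powr (-a) * hyp2F1_series a (c - b) c (x / (x - 1))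
      else undefined)"

definition xi :: "real \<Rightarrow> real \<Rightarrow> real" where
  "xi q z = (q - z) / (1 - z)"

text \<open>Probability generating function of the linear birth-death process (birth rate
  alpha, death rate beta, one initial cell) at time s: phi_s(z).\<close>
definition bd_pgf :: "real \<Rightarrow> real \<Rightarrow> real \<Rightarrow> real \<Rightarrow> real" where
  "bd_pgf \<alpha> \<beta> s z = 1 - (1 - \<beta>/\<alpha>) / (1 - xi (\<beta>/\<alpha>) z * exp (-(\<alpha> - \<beta>) * s))"

text \<open>Transient distribution of the linear birth-death process with birth rate alpha,
  death rate beta, started from one cell, at time s (Kendall 1948):
  P(Z_s = 0) = a_s, P(Z_s = n) = (1 - a_s)(1 - b_s) b_s^(n-1) for n \<ge> 1, where
  a_s = beta (e^{lambda s} - 1)/(alpha e^{lambda s} - beta),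
  b_s = alpha (e^{lambda s} - 1)/(alpha e^{lambda s} - beta).\<close>
definition bd_prob :: "real \<Rightarrow> real \<Rightarrow> real \<Rightarrow> nat \<Rightarrow> real" where
  "bd_prob \<alpha> \<beta> s n =
     (let E = exp ((\<alpha> - \<beta>) * s);
          a = \<beta> * (E - 1) / (\<alpha> * E - \<beta>);
          b = \<alpha> * (E - 1) / (\<alpha> * E - \<beta>)
      in if n = 0 then a else (1 - a) * (1 - b) * b ^ (n - 1))"

text \<open>Law of Y = Z_X with X ~ Exp(delta) independent of the birth-death process Z.\<close>
definition Y_prob :: "real \<Rightarrow> real \<Rightarrow> real \<Rightarrow> nat \<Rightarrow> real" where
  "Y_prob \<alpha> \<beta> \<delta> n = (LBINT s:{0..}. \<delta> * exp (-\<delta> * s) * bd_prob \<alpha> \<beta> s n)"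

end

theory Submission
  imports Defs
begin


lemma Ici_Ioi_integrable:
  fixes f :: "real \<Rightarrow> real"
  shows "set_integrable lborel {0::real..} f \<longleftrightarrow> set_integrable lborel {0<..} f"
  by (rule set_integrable_discrete_difference[where X="{0}"]) auto

lemma Ici_Ioi_integral:
  fixes f :: "real \<Rightarrow> real"
  shows "(LBINT t:{0::real..}. f t) = (LBINT t:{0<..}. f t)"
  by (rule set_integral_discrete_difference[where X="{0}"]) auto

lemma FTC_Ici_nonneg:
  fixes f F :: "real \<Rightarrow> real"
  assumes D: "\<And>x. x > 0 \<Longrightarrow> DERIV F x :> f x"
    and C: "\<And>x. x > 0 \<Longrightarrow> isCont f x"
    and N: "\<And>x. x > 0 \<Longrightarrow> f x \<ge> 0"
    and A: "(F \<longlongrightarrow> A) (at_right 0)"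
    and B: "(F \<longlongrightarrow> 0) at_top"
  shows "set_integrable lborel {0..} f" "(LBINT t:{0..}. f t) = - A"
proof -
  have A': "((F \<circ> real_of_ereal) \<longlongrightarrow> A) (at_right (ereal 0))"
    using A by (simp add: ereal_tendsto_simps)
  have B': "((F \<circ> real_of_ereal) \<longlongrightarrow> 0) (at_left \<infinity>)"
    using B by (simp add: ereal_tendsto_simps)
  note R = interval_integral_FTC_nonneg[where a=0 and b=\<infinity> and F="F" and f="f", OF _ _ _ _ A'[unfolded zero_ereal_def[symmetric]] B']
  have R1: "set_integrable lborel (einterval 0 \<infinity>) f"
    by (rule R(1)) (auto simp: zero_ereal_def intro: D C N)
  have R2: "(LBINT x=0..\<infinity>. f x) = 0 - A"
    by (rule R(2)) (auto simp: zero_ereal_def intro: D C N)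
  show "set_integrable lborel {0..} f"
    using R1 by (simp add: Ici_Ioi_integrable einterval_def zero_ereal_def greaterThan_def)
  show "(LBINT t:{0..}. f t) = - A"
    using R2 by (simp add: Ici_Ioi_integral interval_integral_Ioi zero_ereal_def)
qed

lemma FTC_Ici:
  fixes f F :: "real \<Rightarrow> real"
  assumes D: "\<And>x. x > 0 \<Longrightarrow> DERIV F x :> f x"
    and C: "\<And>x. x > 0 \<Longrightarrow> isCont f x"
    and I: "set_integrable lborel {0..} f"
    and A: "(F \<longlongrightarrow> A) (at_right 0)"
    and B: "(F \<longlongrightarrow> 0) at_top"
  shows "(LBINT t:{0..}. f t) = - A"
proof -
  have A': "((F \<circ> real_of_ereal) \<longlongrightarrow> A) (at_right (ereal 0))"
    using A by (simp add: ereal_tendsto_simps)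
  have B': "((F \<circ> real_of_ereal) \<longlongrightarrow> 0) (at_left \<infinity>)"
    using B by (simp add: ereal_tendsto_simps)
  note R = interval_integral_FTC_integrable[where a=0 and b=\<infinity> and F="F" and f="f", OF _ _ _ _ A'[unfolded zero_ereal_def[symmetric]] B']
  have R2: "(LBINT x=0..\<infinity>. f x) = 0 - A"
    by (rule R) (use I in \<open>auto simp: zero_ereal_def Ici_Ioi_integrable einterval_def greaterThan_def
        has_real_derivative_iff_has_vector_derivative[symmetric] intro: D C\<close>)
  show "(LBINT t:{0..}. f t) = - A"
    using R2 by (simp add: Ici_Ioi_integral interval_integral_Ioi zero_ereal_def)
qed

lemma exp_integral:
  fixes c :: real assumes c: "c > 0"
  shows "set_integrable lborel {0..} (\<lambda>t. exp (-c*t))"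
    "(LBINT t:{0..}. exp (-c*t)) = 1/c"
proof -
  let ?F = "\<lambda>t. - exp (-c*t) / c"
  have D: "DERIV ?F x :> exp (-c*x)" for x
    using c by (auto intro!: derivative_eq_intros simp: field_simps)
  have A: "(?F \<longlongrightarrow> -1/c) (at_right 0)"
    using c by (auto intro!: tendsto_eq_intros)
  have B: "(?F \<longlongrightarrow> 0) at_top"
  proof -
    have *: "((\<lambda>t. exp (- c*t)) \<longlongrightarrow> 0) at_top"
      using c by (auto intro!: exp_at_bot[THEN filterlim_compose] filterlim_tendsto_pos_mult_at_top filterlim_ident
             simp: filterlim_uminus_at_bot)
    have "((\<lambda>t. - exp (-c*t) / c) \<longlongrightarrow> - 0 / c) at_top"
      by (intro tendsto_divide tendsto_minus * tendsto_const) (use c in auto)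
    then show ?thesis by simp
  qed
  note R = FTC_Ici_nonneg[OF D _ _ A B]
  show "set_integrable lborel {0..} (\<lambda>t. exp (-c*t))" by (rule R) auto
  show "(LBINT t:{0..}. exp (-c*t)) = 1/c" using R(2) by simp
qed


lemma g_integrable:
  fixes d l :: real assumes d: "d > 0" and l: "l > 0"
  shows "set_integrable lborel {0..} (\<lambda>t. exp (-d*t) * (1 - exp (-l*t))^n)"
proof -
  have M: "set_borel_measurable lborel {0..} (\<lambda>t. exp (-d*t) * (1 - exp (-l*t))^n)"
    unfolding set_borel_measurable_def by measurable
  have AE: "AE x in lborel. x \<in> {0..} \<longrightarrow> norm (exp (-d*x) * (1 - exp (-l*x))^n) \<le> norm (exp (-d*x))"
  proof (rule AE_I2, rule impI)
    fix x :: real assume "x \<in> {0..}"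
    then have "exp (-l*x) \<le> 1" using l by auto
    moreover have "exp (-l*x) > 0" by simp
    ultimately have "\<bar>1 - exp (-l*x)\<bar>^n \<le> 1" by (intro power_le_one) auto
    then show "norm (exp (-d*x) * (1 - exp (-l*x))^n) \<le> norm (exp (-d*x))"
      by (simp add: abs_mult power_abs)
  qed
  show ?thesis by (rule set_integrable_bound[OF exp_integral(1)[OF d] M AE])
qed

lemma g_rec:
  fixes d l :: real assumes d: "d > 0" and l: "l > 0"
  shows "(d + (Suc n) * l) * (LBINT t:{0..}. exp (-d*t) * (1 - exp (-l*t))^(Suc n))
       = (Suc n) * l * (LBINT t:{0..}. exp (-d*t) * (1 - exp (-l*t))^n)"
proof -
  let ?g = "\<lambda>n t. exp (-d*t) * (1 - exp (-l*t))^n"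
  let ?F = "\<lambda>t. - exp (-d*t) * (1 - exp (-l*t))^(Suc n)"
  let ?f = "\<lambda>t. (d + (Suc n) * l) * ?g (Suc n) t - (Suc n) * l * ?g n t"
  have D: "DERIV ?F x :> ?f x" for x
  proof -
    have "DERIV ?F x :> (d * exp (-d*x) * (1 - exp (-l*x))^(Suc n)
       - exp (-d*x) * ((Suc n) * (1 - exp (-l*x))^n * (l * exp (-l*x))))"
      apply (rule derivative_eq_intros refl)+
      apply simp
      done
    moreover have "d * exp (-d*x) * (1 - exp (-l*x))^(Suc n)
       - exp (-d*x) * ((Suc n) * (1 - exp (-l*x))^n * (l * exp (-l*x))) = ?f x"
    proof -
      have "exp (-l*x) = 1 - (1 - exp (-l*x))" by simp
      then show ?thesis by (simp add: algebra_simps)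
    qed
    ultimately show ?thesis by simp
  qed
  have J1: "set_integrable lborel {0..} (\<lambda>t. (d + (Suc n) * l) * ?g (Suc n) t)"
    by (intro set_integrable_mult_right g_integrable[OF d l])
  have J2: "set_integrable lborel {0..} (\<lambda>t. (Suc n) * l * ?g n t)"
    by (intro set_integrable_mult_right g_integrable[OF d l])
  have I: "set_integrable lborel {0..} ?f"
    by (rule set_integral_diff(1)[OF J1 J2])
  have A: "(?F \<longlongrightarrow> 0) (at_right 0)"
  proof -
    have "(?F \<longlongrightarrow> ?F 0) (at_right 0)" by (intro tendsto_intros)
    then show ?thesis by simp
  qed
  have B: "(?F \<longlongrightarrow> 0) at_top"
  proof -
    have *: "((\<lambda>t. exp (- d*t)) \<longlongrightarrow> 0) at_top"
      using d by (auto intro!: exp_at_bot[THEN filterlim_compose] filterlim_tendsto_pos_mult_at_top filterlim_ident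
             simp: filterlim_uminus_at_bot)
    have **: "((\<lambda>t. exp (- l*t)) \<longlongrightarrow> 0) at_top"
      using l by (auto intro!: exp_at_bot[THEN filterlim_compose] filterlim_tendsto_pos_mult_at_top filterlim_ident
             simp: filterlim_uminus_at_bot)
    have "(?F \<longlongrightarrow> - 0 * (1 - 0)^(Suc n)) at_top"
      by (intro tendsto_intros * **)
    then show ?thesis by simp
  qed
  have "(LBINT t:{0..}. ?f t) = - 0"
    by (rule FTC_Ici[OF D _ I A B]) (auto intro!: continuous_intros)
  moreover have "(LBINT t:{0..}. ?f t) = (d + (Suc n) * l) * (LBINT t:{0..}. ?g (Suc n) t) - (Suc n) * l * (LBINT t:{0..}. ?g n t)"
    by (simp only: set_integral_diff(2)[OF J1 J2] set_integral_mult_right)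
  ultimately show ?thesis by linarith
qed

lemma g_closed:
  fixes d l :: real assumes d: "d > 0" and l: "l > 0"
  shows "(LBINT t:{0..}. exp (-d*t) * (1 - exp (-l*t))^n) = fact n / (pochhammer (1 + d/l) n * d)"
proof (induction n)
  case 0
  then show ?case using exp_integral(2)[OF d] by simp
next
  case (Suc n)
  have p: "pochhammer (1 + d/l) n > 0" by (intro pochhammer_pos) (use d l in \<open>auto intro: add_pos_pos\<close>)
  have "(d + (Suc n) * l) * (LBINT t:{0..}. exp (-d*t) * (1 - exp (-l*t))^(Suc n))
       = (Suc n) * l * (fact n / (pochhammer (1 + d/l) n * d))"
    using g_rec[OF d l, of n] by (simp only: Suc.IH)
  moreover have "d + (Suc n) * l > 0" using d l by (simp add: add_pos_nonneg)
  moreover have "X = b / a" if "a * X = b" "a > 0" for a b X :: real using that by (simp add: field_simps)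
  ultimately have "(LBINT t:{0..}. exp (-d*t) * (1 - exp (-l*t))^(Suc n))
       = (Suc n) * l * (fact n / (pochhammer (1 + d/l) n * d)) / (d + (Suc n) * l)"
    by blast
  also have "\<dots> = fact (Suc n) / (pochhammer (1 + d/l) (Suc n) * d)"
    using d l p by (simp add: pochhammer_Suc field_simps)
  finally show ?case .
qed


lemma set_integral_sums:
  fixes f :: "nat \<Rightarrow> real \<Rightarrow> real"
  assumes I: "\<And>n. set_integrable lborel {0..} (f n)"
    and S: "\<And>t. t \<ge> 0 \<Longrightarrow> summable (\<lambda>n. \<bar>f n t\<bar>)"
    and T: "summable (\<lambda>n. LBINT t:{0..}. \<bar>f n t\<bar>)"
  shows "(\<lambda>n. LBINT t:{0..}. f n t) sums (LBINT t:{0..}. (\<Sum>n. f n t))"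
proof -
  let ?g = "\<lambda>n t. indicator {0..} t *\<^sub>R f n t"
  have 1: "integrable lborel (?g n)" for n using I[of n] by (simp add: set_integrable_def)
  have 2: "AE t in lborel. summable (\<lambda>n. norm (?g n t))"
    using S by (auto simp: indicator_def)
  have 3: "(\<integral>t. norm (?g n t) \<partial>lborel) = (LBINT t:{0..}. \<bar>f n t\<bar>)" for n
    unfolding set_lebesgue_integral_def by (intro Bochner_Integration.integral_cong) (auto simp: indicator_def)
  have "(\<lambda>n. integral\<^sup>L lborel (?g n)) sums (\<integral>t. (\<Sum>n. ?g n t) \<partial>lborel)"
    by (rule sums_integral[OF 1 2]) (use T 3 in simp)
  moreover have "(\<Sum>n. ?g n t) = indicator {0..} t *\<^sub>R (\<Sum>n. f n t)" for t
    by (simp add: indicator_def)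
  ultimately show ?thesis by (simp add: set_lebesgue_integral_def)
qed

lemma poch_ratio:
  fixes g :: real assumes g: "g > 0"
  shows "pochhammer g n / pochhammer (1 + g) n = g / (g + n)"
proof -
  have "pochhammer g (Suc n) = g * pochhammer (g + 1) n" by (rule pochhammer_rec)
  also have "pochhammer g (Suc n) = pochhammer g n * (g + n)" by (rule pochhammer_Suc)
  finally have e: "pochhammer g n * (g + n) = g * pochhammer (1 + g) n" by (simp add: add.commute)
  have "pochhammer (1 + g) n > 0" using g by (intro pochhammer_pos) simp
  moreover have "g + n > 0" using g by simp
  ultimately show ?thesis using e by (simp add: field_simps)
qed

lemma poch_le:
  fixes g :: real assumes g: "g > 0"
  shows "fact n \<le> pochhammer (1 + g) n"
proof (induction n)
  case (Suc n)
  have "fact (Suc n) = fact n * (1 + real n)" by (simp add: algebra_simps)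
  also have "\<dots> \<le> pochhammer (1 + g) n * (1 + g + real n)"
    using Suc g by (intro mult_mono) (auto intro: less_imp_le[OF pochhammer_pos])
  finally show ?case by (simp add: pochhammer_Suc)
qed simp

context
  fixes d l :: real assumes d: "d > 0" and l: "l > 0"
begin

lemma key_small:
  assumes x: "\<bar>x\<bar> < 1"
  shows "(LBINT t:{0..}. d * exp (-d*t) / (1 - x * exp (-l*t))) = hyp2F1 1 (d/l) (1 + d/l) x"
proof -
  define f where "f n t = d * x^n * exp (- (d + n*l) * t)" for n t
  have e: "exp (- (d + n*l) * t) = exp (-d*t) * exp(-l*t)^n" for n t
    by (simp add: exp_add[symmetric] exp_of_nat_mult[symmetric] algebra_simps)
  have pos: "d + n*l > 0" for n :: nat using d l by (simp add: add_pos_nonneg)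
  note EI = exp_integral[OF pos]
  have I: "set_integrable lborel {0..} (f n)" for n
    unfolding f_def using EI(1)[of n] by (intro set_integrable_mult_right) auto
  have S: "summable (\<lambda>n. \<bar>f n t\<bar>)" if "t \<ge> 0" for t
  proof -
    have "\<bar>x * exp (-l*t)\<bar> < 1"
      using x that l by (simp add: abs_mult) (smt (verit) exp_le_one_iff mult_less_cancel_left1 mult_nonneg_nonneg)
    then have "summable (\<lambda>n. \<bar>d\<bar> * \<bar>x * exp (-l*t)\<bar>^n * \<bar>exp (-d*t)\<bar>)"
      by (intro summable_mult summable_mult2 summable_geometric) simp
    then show ?thesis unfolding f_def e by (simp add: abs_mult power_abs power_mult_distrib mult_ac)
  qed
  have T1: "(LBINT t:{0..}. \<bar>f n t\<bar>) = d * \<bar>x\<bar>^n / (d + n*l)" for n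
  proof -
    have "(LBINT t:{0..}. \<bar>f n t\<bar>) = (LBINT t:{0..}. (d * \<bar>x\<bar>^n) * exp (- (d + n*l) * t))"
      unfolding f_def using d by (intro set_lebesgue_integral_cong) (auto simp: abs_mult power_abs)
    also have "\<dots> = d * \<bar>x\<bar>^n / (d + n*l)" using EI(2)[of n] by simp
    finally show ?thesis .
  qed
  have T: "summable (\<lambda>n. LBINT t:{0..}. \<bar>f n t\<bar>)"
  proof -
    have G: "summable (\<lambda>n. \<bar>x\<bar>^n)" using x by (intro summable_geometric) simp
    have B: "norm (d * \<bar>x\<bar>^n / (d + n*l)) \<le> \<bar>x\<bar>^n" for n :: nat
    proof -
      have "d / (d + n*l) \<le> 1" using pos[of n] d l by (simp add: divide_le_eq)
      then have "d / (d + n*l) * \<bar>x\<bar>^n \<le> \<bar>x\<bar>^n"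
        using d pos[of n] by (intro mult_left_le_one_le) auto
      then show ?thesis using d pos[of n] by (simp add: abs_mult)
    qed
    show ?thesis unfolding T1 by (rule summable_comparison_test'[OF G B])
  qed
  have F: "(LBINT t:{0..}. f n t) = (d/l) / (d/l + n) * x^n" for n
  proof -
    have "(LBINT t:{0..}. f n t) = d * x^n / (d + n*l)"
      unfolding f_def using EI(2)[of n] by simp
    also have "\<dots> = (d/l) / (d/l + n) * x^n" using l by (simp add: field_simps)
    finally show ?thesis .
  qed
  have sumeq: "(\<Sum>n. f n t) = d * exp (-d*t) / (1 - x * exp (-l*t))" if "t \<ge> 0" for t
  proof -
    have "\<bar>x * exp (-l*t)\<bar> < 1"
      using x that l by (simp add: abs_mult) (smt (verit) exp_le_one_iff mult_less_cancel_left1 mult_nonneg_nonneg)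
    then have "(\<lambda>n. (x * exp (-l*t))^n) sums (1 / (1 - x * exp (-l*t)))"
      by (intro geometric_sums) simp
    then have "(\<lambda>n. (d * exp (-d*t)) * (x * exp (-l*t))^n) sums ((d * exp (-d*t)) * (1 / (1 - x * exp (-l*t))))"
      by (rule sums_mult)
    moreover have "f n t = (d * exp (-d*t)) * (x * exp (-l*t))^n" for n
      unfolding f_def e by (simp add: power_mult_distrib)
    ultimately show ?thesis by (simp add: sums_iff)
  qed
  have "(\<lambda>n. (d/l) / (d/l + n) * x^n) sums (LBINT t:{0..}. (\<Sum>n. f n t))"
    using set_integral_sums[OF I S T] F by simp
  also have "(LBINT t:{0..}. (\<Sum>n. f n t)) = (LBINT t:{0..}. d * exp (-d*t) / (1 - x * exp (-l*t)))"
    using sumeq by (intro set_lebesgue_integral_cong) auto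
  finally have *: "(\<lambda>n. (d/l) / (d/l + n) * x^n) sums (LBINT t:{0..}. d * exp (-d*t) / (1 - x * exp (-l*t)))" .
  have "pochhammer 1 n * pochhammer (d/l) n / (pochhammer (1 + d/l) n * fact n) * x ^ n = (d/l) / (d/l + n) * x^n" for n
    using poch_ratio[of "d/l" n] d l by (simp add: pochhammer_fact[symmetric] field_simps)
  then show ?thesis using * x unfolding hyp2F1_def hyp2F1_series_def by (simp add: sums_iff)
qed

end


context
  fixes d l :: real assumes d: "d > 0" and l: "l > 0"
begin

lemma key_large:
  assumes x: "x \<le> -1"
  shows "(LBINT t:{0..}. d * exp (-d*t) / (1 - x * exp (-l*t))) = hyp2F1 1 (d/l) (1 + d/l) x"
proof -
  define w where "w = x / (x - 1)"
  have w0: "0 < w" and w1: "w < 1" using x by (auto simp: w_def field_simps)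
  have x1: "1 - x > 0" using x by simp
  define f where "f n t = d / (1 - x) * w^n * (exp (-d*t) * (1 - exp (-l*t))^n)" for n t
  have P: "pochhammer (1 + d/l) n > 0" for n using d l by (intro pochhammer_pos) (simp add: add_pos_pos)
  have I: "set_integrable lborel {0..} (f n)" for n
    unfolding f_def using g_integrable[OF d l, of n] by (intro set_integrable_mult_right) auto
  have v: "0 \<le> 1 - exp (-l*t)" "1 - exp (-l*t) < 1" if "t \<ge> 0" for t
    using that l by auto
  have wv: "\<bar>w * (1 - exp (-l*t))\<bar> < 1" if "t \<ge> 0" for t
  proof -
    have "w * (1 - exp (-l*t)) \<le> w * 1" using v[OF that] w0 by (intro mult_left_mono) auto
    moreover have "0 \<le> w * (1 - exp (-l*t))" using v[OF that] w0 by simp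
    ultimately show ?thesis using w1 by simp
  qed
  have fnn: "f n t \<ge> 0" if "t \<ge> 0" for n t
    unfolding f_def using v[OF that] w0 x1 d by simp
  have F: "(LBINT t:{0..}. f n t) = w^n * fact n / ((1 - x) * pochhammer (1 + d/l) n)" for n
  proof -
    have "(LBINT t:{0..}. f n t) = d / (1 - x) * w^n * (fact n / (pochhammer (1 + d/l) n * d))"
      unfolding f_def g_closed[OF d l, symmetric] by simp
    also have "\<dots> = w^n * fact n / ((1 - x) * pochhammer (1 + d/l) n)"
      using d x1 P[of n] by (simp add: field_simps)
    finally show ?thesis .
  qed
  have S: "summable (\<lambda>n. \<bar>f n t\<bar>)" if "t \<ge> 0" for t
  proof -
    have "\<bar>w * (1 - exp (-l*t))\<bar> < 1"
      by (rule wv[OF that])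
    then have "summable (\<lambda>n. (d / (1 - x) * exp (-d*t)) * (w * (1 - exp (-l*t)))^n)"
      by (intro summable_mult summable_geometric) simp
    moreover have "\<bar>f n t\<bar> = (d / (1 - x) * exp (-d*t)) * (w * (1 - exp (-l*t)))^n" for n
    proof -
      have "\<bar>f n t\<bar> = f n t" using fnn[OF that, of n] by simp
      also have "f n t = (d / (1 - x) * exp (-d*t)) * (w * (1 - exp (-l*t)))^n"
        unfolding f_def by (simp add: power_mult_distrib mult_ac)
      finally show ?thesis .
    qed
    ultimately show ?thesis by simp
  qed
  have T: "summable (\<lambda>n. LBINT t:{0..}. \<bar>f n t\<bar>)"
  proof -
    have A: "(LBINT t:{0..}. \<bar>f n t\<bar>) = w^n * fact n / ((1 - x) * pochhammer (1 + d/l) n)" for n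
      unfolding F[symmetric] using fnn by (intro set_lebesgue_integral_cong) auto
    have G: "summable (\<lambda>n. w^n / (1 - x))" using w0 w1 by (intro summable_divide summable_geometric) simp
    have B: "norm (w^n * fact n / ((1 - x) * pochhammer (1 + d/l) n)) \<le> w^n / (1 - x)" for n
    proof -
      have "fact n / pochhammer (1 + d/l) n \<le> 1" using poch_le[of "d/l" n] P[of n] d l by simp
      then have "w^n / (1 - x) * (fact n / pochhammer (1 + d/l) n) \<le> w^n / (1 - x)"
        using w0 x1 P[of n] by (intro mult_right_le_one_le) auto
      then show ?thesis using w0 x1 P[of n] by (simp add: abs_mult)
    qed
    show ?thesis unfolding A by (rule summable_comparison_test'[OF G B])
  qed
  have sumeq: "(\<Sum>n. f n t) = d * exp (-d*t) / (1 - x * exp (-l*t))" if "t \<ge> 0" for t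
  proof -
    have "\<bar>w * (1 - exp (-l*t))\<bar> < 1"
      by (rule wv[OF that])
    then have "(\<lambda>n. (w * (1 - exp (-l*t)))^n) sums (1 / (1 - w * (1 - exp (-l*t))))"
      by (intro geometric_sums) simp
    then have "(\<lambda>n. (d / (1 - x) * exp (-d*t)) * (w * (1 - exp (-l*t)))^n) sums
        ((d / (1 - x) * exp (-d*t)) * (1 / (1 - w * (1 - exp (-l*t)))))"
      by (rule sums_mult)
    moreover have "f n t = (d / (1 - x) * exp (-d*t)) * (w * (1 - exp (-l*t)))^n" for n
      unfolding f_def by (simp add: power_mult_distrib mult_ac)
    moreover have "(d / (1 - x) * exp (-d*t)) * (1 / (1 - w * (1 - exp (-l*t))))
        = d * exp (-d*t) / (1 - x * exp (-l*t))"
    proof -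
      have "(1 - x) * (1 - w * (1 - exp (-l*t))) = 1 - x * exp (-l*t)"
        using x1 unfolding w_def by (simp add: field_simps)
      then show ?thesis by (simp add: field_simps)
    qed
    ultimately show ?thesis by (simp add: sums_iff)
  qed
  have "(\<lambda>n. w^n * fact n / ((1 - x) * pochhammer (1 + d/l) n)) sums (LBINT t:{0..}. (\<Sum>n. f n t))"
    using set_integral_sums[OF I S T] F by simp
  also have "(LBINT t:{0..}. (\<Sum>n. f n t)) = (LBINT t:{0..}. d * exp (-d*t) / (1 - x * exp (-l*t)))"
    using sumeq by (intro set_lebesgue_integral_cong) auto
  finally have *: "(\<lambda>n. w^n * fact n / ((1 - x) * pochhammer (1 + d/l) n)) sums
      (LBINT t:{0..}. d * exp (-d*t) / (1 - x * exp (-l*t)))" .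
  then have **: "(\<lambda>n. fact n / pochhammer (1 + d/l) n * w^n) sums
      ((1 - x) * (LBINT t:{0..}. d * exp (-d*t) / (1 - x * exp (-l*t))))"
  proof -
    have "(\<lambda>n. (1 - x) * (w^n * fact n / ((1 - x) * pochhammer (1 + d/l) n))) = (\<lambda>n. fact n / pochhammer (1 + d/l) n * w^n)"
      using x1 by (simp add: fun_eq_iff)
    then show ?thesis using sums_mult[OF *, of "1 - x"] by simp
  qed
  have t: "pochhammer 1 n * pochhammer 1 n / (pochhammer (1 + d/l) n * fact n) * w ^ n
      = fact n / pochhammer (1 + d/l) n * w^n" for n
    by (simp add: pochhammer_fact[symmetric])
  have "hyp2F1 1 (d/l) (1 + d/l) x = (1 - x) powr (-1) * hyp2F1_series 1 1 (1 + d/l) w"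
    using x unfolding hyp2F1_def w_def by simp
  also have "\<dots> = (LBINT t:{0..}. d * exp (-d*t) / (1 - x * exp (-l*t)))"
    unfolding hyp2F1_series_def t using ** x1 by (simp add: sums_iff powr_neg_one)
  finally show ?thesis ..
qed

end


lemma key_integral:
  fixes d l x :: real assumes d: "d > 0" and l: "l > 0" and x: "x < 1"
  shows "(LBINT t:{0..}. d * exp (-d*t) / (1 - x * exp (-l*t))) = hyp2F1 1 (d/l) (1 + d/l) x"
proof (cases "\<bar>x\<bar> < 1")
  case True then show ?thesis by (rule key_small[OF d l])
next
  case False then show ?thesis using x by (intro key_large[OF d l]) auto
qed

lemma key_integrable:
  fixes d l x :: real assumes d: "d > 0" and l: "l > 0" and x: "x < 1"
  shows "set_integrable lborel {0..} (\<lambda>t. d * exp (-d*t) / (1 - x * exp (-l*t)))"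
proof -
  define m where "m = min 1 (1 - x)"
  have m: "m > 0" using x by (simp add: m_def)
  have low: "1 - x * exp (-l*t) \<ge> m" if "t \<ge> 0" for t
  proof (cases "x \<ge> 0")
    case True
    have "x * exp (-l*t) \<le> x * 1" using True that l by (intro mult_left_mono) auto
    then show ?thesis by (simp add: m_def)
  next
    case False
    then have "x * exp (-l*t) \<le> 0" by (simp add: mult_nonpos_nonneg)
    then show ?thesis by (simp add: m_def)
  qed
  have B: "set_integrable lborel {0..} (\<lambda>t. (d / m) * exp (-d*t))"
    using exp_integral(1)[OF d] by (intro set_integrable_mult_right) auto
  show ?thesis
  proof (rule set_integrable_bound[OF B])
    show "set_borel_measurable lborel {0..} (\<lambda>t. d * exp (-d*t) / (1 - x * exp (-l*t)))"
      unfolding set_borel_measurable_def by measurable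
    show "AE t in lborel. t \<in> {0..} \<longrightarrow> norm (d * exp (-d*t) / (1 - x * exp (-l*t))) \<le> norm ((d / m) * exp (-d*t))"
    proof (rule AE_I2, rule impI)
      fix t :: real assume "t \<in> {0..}"
      then have L: "1 - x * exp (-l*t) \<ge> m" using low by auto
      have "d * exp (-d*t) / (1 - x * exp (-l*t)) \<le> d * exp (-d*t) / m"
        using L m d by (intro divide_left_mono) auto
      then show "norm (d * exp (-d*t) / (1 - x * exp (-l*t))) \<le> norm ((d / m) * exp (-d*t))"
        using L m d by simp
    qed
  qed
qed

lemma xi_lt1:
  fixes q z :: real assumes "q < 1" "0 \<le> z" "z < 1"
  shows "xi q z < 1"
  using assms unfolding xi_def by (simp add: divide_less_eq)

lemma claim2:
  fixes \<alpha> \<beta> \<delta> z :: real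
  assumes \<delta>: "\<delta> > 0" and \<beta>: "\<beta> \<ge> 0" and \<alpha>: "\<alpha> > \<beta>" and z: "0 \<le> z" "z < 1"
  shows "set_integrable lborel {0..} (\<lambda>t. bd_pgf \<alpha> \<beta> t z * (\<delta> * exp (-\<delta> * t)))"
    "(LBINT t:{0..}. bd_pgf \<alpha> \<beta> t z * (\<delta> * exp (-\<delta> * t)))
       = 1 - (1 - \<beta>/\<alpha>) * hyp2F1 1 (\<delta>/(\<alpha>-\<beta>)) (1 + \<delta>/(\<alpha>-\<beta>)) (xi (\<beta>/\<alpha>) z)"
proof -
  have l: "\<alpha> - \<beta> > 0" using \<alpha> by simp
  have q: "\<beta>/\<alpha> < 1" using \<alpha> \<beta> by (simp add: divide_less_eq)
  define x where "x = xi (\<beta>/\<alpha>) z"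
  have x: "x < 1" unfolding x_def by (rule xi_lt1[OF q z])
  have eq: "bd_pgf \<alpha> \<beta> t z * (\<delta> * exp (-\<delta> * t)) =
     \<delta> * exp (-\<delta> * t) - (1 - \<beta>/\<alpha>) * (\<delta> * exp (-\<delta>*t) / (1 - x * exp (-(\<alpha>-\<beta>)*t)))" for t
    unfolding bd_pgf_def x_def by (simp add: algebra_simps)
  have I1: "set_integrable lborel {0..} (\<lambda>t. \<delta> * exp (-\<delta> * t))"
    using exp_integral(1)[OF \<delta>] by (intro set_integrable_mult_right) auto
  have I2: "set_integrable lborel {0..} (\<lambda>t. (1 - \<beta>/\<alpha>) * (\<delta> * exp (-\<delta>*t) / (1 - x * exp (-(\<alpha>-\<beta>)*t))))"
    using key_integrable[OF \<delta> l x] by (intro set_integrable_mult_right) auto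
  show "set_integrable lborel {0..} (\<lambda>t. bd_pgf \<alpha> \<beta> t z * (\<delta> * exp (-\<delta> * t)))"
    unfolding eq by (rule set_integral_diff(1)[OF I1 I2])
  have "(LBINT t:{0..}. bd_pgf \<alpha> \<beta> t z * (\<delta> * exp (-\<delta> * t)))
     = (LBINT t:{0..}. \<delta> * exp (-\<delta> * t)) - (LBINT t:{0..}. (1 - \<beta>/\<alpha>) * (\<delta> * exp (-\<delta>*t) / (1 - x * exp (-(\<alpha>-\<beta>)*t))))"
    unfolding eq by (rule set_integral_diff(2)[OF I1 I2])
  also have "\<dots> = \<delta> * (LBINT t:{0..}. exp (-\<delta> * t)) - (1 - \<beta>/\<alpha>) * (LBINT t:{0..}. \<delta> * exp (-\<delta>*t) / (1 - x * exp (-(\<alpha>-\<beta>)*t)))"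
    by (simp only: set_integral_mult_right)
  also have "\<dots> = 1 - (1 - \<beta>/\<alpha>) * hyp2F1 1 (\<delta>/(\<alpha>-\<beta>)) (1 + \<delta>/(\<alpha>-\<beta>)) x"
    by (simp only: exp_integral(2)[OF \<delta>] key_integral[OF \<delta> l x]) (use \<delta> in simp)
  finally show "(LBINT t:{0..}. bd_pgf \<alpha> \<beta> t z * (\<delta> * exp (-\<delta> * t)))
       = 1 - (1 - \<beta>/\<alpha>) * hyp2F1 1 (\<delta>/(\<alpha>-\<beta>)) (1 + \<delta>/(\<alpha>-\<beta>)) (xi (\<beta>/\<alpha>) z)"
    unfolding x_def .
qed


lemma alg:
  fixes \<alpha> \<beta> E z :: real
  assumes \<alpha>: "\<alpha> > \<beta>" and \<beta>: "\<beta> \<ge> 0" and E: "E \<ge> 1" and z: "0 \<le> z" "z < 1"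
  shows "\<beta> * (E - 1) / (\<alpha> * E - \<beta>) + (1 - \<beta> * (E - 1) / (\<alpha> * E - \<beta>)) * (1 - \<alpha> * (E - 1) / (\<alpha> * E - \<beta>)) * z
      / (1 - \<alpha> * (E - 1) / (\<alpha> * E - \<beta>) * z)
    = 1 - (1 - \<beta>/\<alpha>) / (1 - ((\<beta>/\<alpha> - z) / (1 - z)) * (1 / E))"
proof -
  have a0: "\<alpha> > 0" using \<alpha> \<beta> by simp
  have D: "\<alpha> * E - \<beta> > 0" using \<alpha> E a0 by (smt (verit) mult_le_cancel_left1)
  have Q: "\<alpha> * E - \<beta> - \<alpha> * (E - 1) * z > 0"
  proof -
    have "\<alpha> * (E - 1) * z \<le> \<alpha> * (E - 1)" using z E a0 by (simp add: mult_left_le)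
    moreover have "\<alpha> * (E - 1) = \<alpha> * E - \<alpha>" by (simp add: algebra_simps)
    ultimately show ?thesis using \<alpha> by linarith
  qed
  have R: "\<alpha> * E * (1 - z) - (\<beta> - \<alpha> * z) > 0"
  proof -
    have "\<alpha> * E * (1 - z) \<ge> \<alpha> * (1 - z)" using E a0 z by (simp add: mult_right_mono)
    then show ?thesis using \<alpha> z by (simp add: algebra_simps)
  qed
  have E0: "E > 0" using E by simp
  have z1: "1 - z > 0" using z by simp
  have lhs: "\<beta> * (E - 1) / (\<alpha> * E - \<beta>) + (1 - \<beta> * (E - 1) / (\<alpha> * E - \<beta>)) * (1 - \<alpha> * (E - 1) / (\<alpha> * E - \<beta>)) * z
      / (1 - \<alpha> * (E - 1) / (\<alpha> * E - \<beta>) * z)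
    = (\<beta> * (E - 1) * (\<alpha> * E - \<beta> - \<alpha> * (E - 1) * z) + (\<alpha> - \<beta>)^2 * E * z) / ((\<alpha> * E - \<beta>) * (\<alpha> * E - \<beta> - \<alpha> * (E - 1) * z))"
  proof -
    have e1: "1 - \<beta> * (E - 1) / (\<alpha> * E - \<beta>) = (\<alpha> - \<beta>) * E / (\<alpha> * E - \<beta>)"
      using D by (simp add: field_simps)
    have e2: "1 - \<alpha> * (E - 1) / (\<alpha> * E - \<beta>) = (\<alpha> - \<beta>) / (\<alpha> * E - \<beta>)"
      using D by (simp add: field_simps)
    have e3: "1 - \<alpha> * (E - 1) / (\<alpha> * E - \<beta>) * z = (\<alpha> * E - \<beta> - \<alpha> * (E - 1) * z) / (\<alpha> * E - \<beta>)"
      using D by (simp add: field_simps)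
    define DD where "DD = \<alpha> * E - \<beta>"
    define QQ where "QQ = DD - \<alpha> * (E - 1) * z"
    have D': "DD > 0" and Q': "QQ > 0" using D Q by (simp_all add: DD_def QQ_def)
    have f1: "(\<alpha> - \<beta>) * E / DD * ((\<alpha> - \<beta>) / DD) * z / (QQ / DD) = (\<alpha> - \<beta>)^2 * E * z / (DD * QQ)"
      using D' Q' by (simp add: field_simps power2_eq_square)
    have f2: "\<beta> * (E - 1) / DD = \<beta> * (E - 1) * QQ / (DD * QQ)" using D' Q' by simp
    show ?thesis unfolding e1 e2 e3 unfolding DD_def[symmetric] unfolding QQ_def[symmetric] unfolding f1 unfolding f2 add_divide_distrib ..
  qed
  have rhs: "1 - (1 - \<beta>/\<alpha>) / (1 - ((\<beta>/\<alpha> - z) / (1 - z)) * (1 / E))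
     = 1 - (\<alpha> - \<beta>) * E * (1 - z) / (\<alpha> * E * (1 - z) - (\<beta> - \<alpha> * z))"
  proof -
    have r1: "1 - \<beta>/\<alpha> = (\<alpha> - \<beta>) / \<alpha>" using a0 by (simp add: field_simps)
    have r2: "1 - ((\<beta>/\<alpha> - z) / (1 - z)) * (1 / E) = (\<alpha> * E * (1 - z) - (\<beta> - \<alpha> * z)) / (\<alpha> * E * (1 - z))"
      using a0 E0 z1 by (simp add: field_simps)
    define RR where "RR = \<alpha> * E * (1 - z) - (\<beta> - \<alpha> * z)"
    have "RR > 0" using R by (simp add: RR_def)
    then have "(\<alpha> - \<beta>) / \<alpha> / (RR / (\<alpha> * E * (1 - z))) = (\<alpha> - \<beta>) * E * (1 - z) / RR"
      using a0 E0 z1 by (simp add: field_simps)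
    then show ?thesis unfolding r1 r2 RR_def[symmetric] by simp
  qed
  have q: "\<alpha> * E * (1 - z) - (\<beta> - \<alpha> * z) = \<alpha> * E - \<beta> - \<alpha> * (E - 1) * z" by (simp add: algebra_simps)
  have poly: "\<beta> * (E - 1) * (\<alpha> * E - \<beta> - \<alpha> * (E - 1) * z) + (\<alpha> - \<beta>)^2 * E * z
     = (\<alpha> * E - \<beta>) * ((\<alpha> * E - \<beta> - \<alpha> * (E - 1) * z) - (\<alpha> - \<beta>) * E * (1 - z))"
    by (simp add: algebra_simps power2_eq_square)
  have "(\<beta> * (E - 1) * (\<alpha> * E - \<beta> - \<alpha> * (E - 1) * z) + (\<alpha> - \<beta>)^2 * E * z) / ((\<alpha> * E - \<beta>) * (\<alpha> * E - \<beta> - \<alpha> * (E - 1) * z))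
     = ((\<alpha> * E - \<beta> - \<alpha> * (E - 1) * z) - (\<alpha> - \<beta>) * E * (1 - z)) / (\<alpha> * E - \<beta> - \<alpha> * (E - 1) * z)"
    unfolding poly using D by simp
  also have "\<dots> = 1 - (\<alpha> - \<beta>) * E * (1 - z) / (\<alpha> * E - \<beta> - \<alpha> * (E - 1) * z)"
    using Q by (simp add: diff_divide_distrib)
  finally show ?thesis unfolding lhs rhs q .

qed


context
  fixes \<alpha> \<beta> :: real assumes \<alpha>: "\<alpha> > \<beta>" and \<beta>: "\<beta> \<ge> 0"
begin

lemma bd_ab:
  assumes s: "s \<ge> 0"
  defines "E \<equiv> exp ((\<alpha> - \<beta>) * s)"
  shows "E \<ge> 1" "\<alpha> * E - \<beta> > 0"
    "0 \<le> \<beta> * (E - 1) / (\<alpha> * E - \<beta>)" "\<beta> * (E - 1) / (\<alpha> * E - \<beta>) < 1"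
    "0 \<le> \<alpha> * (E - 1) / (\<alpha> * E - \<beta>)" "\<alpha> * (E - 1) / (\<alpha> * E - \<beta>) < 1"
proof -
  have a0: "\<alpha> > 0" using \<alpha> \<beta> by simp
  show E1: "E \<ge> 1" unfolding E_def using s \<alpha> by simp
  have "\<alpha> * E \<ge> \<alpha>" using E1 a0 by simp
  then show D: "\<alpha> * E - \<beta> > 0" using \<alpha> by simp
  show "0 \<le> \<beta> * (E - 1) / (\<alpha> * E - \<beta>)" using D E1 \<beta> by simp
  show "0 \<le> \<alpha> * (E - 1) / (\<alpha> * E - \<beta>)" using D E1 a0 by simp
  have "\<beta> * (E - 1) < \<alpha> * E - \<beta>"
  proof -
    have "\<beta> * E \<le> \<alpha> * E" using \<alpha> E1 by (intro mult_right_mono) auto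
    moreover have "\<beta> * E < \<alpha> * E" using \<alpha> E1 by simp
    ultimately show ?thesis by (simp add: algebra_simps)
  qed
  then show "\<beta> * (E - 1) / (\<alpha> * E - \<beta>) < 1" using D by simp
  have "\<alpha> * (E - 1) < \<alpha> * E - \<beta>" using \<alpha> by (simp add: algebra_simps)
  then show "\<alpha> * (E - 1) / (\<alpha> * E - \<beta>) < 1" using D by simp
qed

lemma bd_prob_bounds:
  assumes s: "s \<ge> 0"
  shows "0 \<le> bd_prob \<alpha> \<beta> s n" "bd_prob \<alpha> \<beta> s n \<le> 1"
proof -
  define E where "E = exp ((\<alpha> - \<beta>) * s)"
  define a where "a = \<beta> * (E - 1) / (\<alpha> * E - \<beta>)"
  define b where "b = \<alpha> * (E - 1) / (\<alpha> * E - \<beta>)"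
  note ab = bd_ab[OF s, folded E_def, folded a_def b_def]
  have eq: "bd_prob \<alpha> \<beta> s n = (if n = 0 then a else (1 - a) * (1 - b) * b ^ (n - 1))"
    unfolding bd_prob_def Let_def E_def a_def b_def ..
  have b1: "b ^ (n - 1) \<le> 1" using ab by (intro power_le_one) auto
  show "0 \<le> bd_prob \<alpha> \<beta> s n" unfolding eq using ab by auto
  have "(1 - a) * (1 - b) * b ^ (n - 1) \<le> 1 * 1 * 1"
    using ab b1 by (intro mult_mono) auto
  then show "bd_prob \<alpha> \<beta> s n \<le> 1" unfolding eq using ab by auto
qed

lemma bd_sums:
  assumes s: "s \<ge> 0" and z: "0 \<le> z" "z < 1"
  shows "(\<lambda>n. bd_prob \<alpha> \<beta> s n * z^n) sums bd_pgf \<alpha> \<beta> s z"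
proof -
  define E where "E = exp ((\<alpha> - \<beta>) * s)"
  define a where "a = \<beta> * (E - 1) / (\<alpha> * E - \<beta>)"
  define b where "b = \<alpha> * (E - 1) / (\<alpha> * E - \<beta>)"
  note ab = bd_ab[OF s, folded E_def, folded a_def b_def]
  have eq: "bd_prob \<alpha> \<beta> s n = (if n = 0 then a else (1 - a) * (1 - b) * b ^ (n - 1))" for n
    unfolding bd_prob_def Let_def E_def a_def b_def ..
  have "\<bar>b * z\<bar> < 1"
  proof -
    have "b * z \<le> b * 1" using ab z by (intro mult_left_mono) auto
    then show ?thesis using ab z by simp
  qed
  then have "(\<lambda>n. (b * z)^n) sums (1 / (1 - b * z))" by (intro geometric_sums) simp
  then have "(\<lambda>n. ((1 - a) * (1 - b) * z) * (b * z)^n) sums (((1 - a) * (1 - b) * z) * (1 / (1 - b * z)))"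
    by (rule sums_mult)
  moreover have "((1 - a) * (1 - b) * z) * (b * z)^n = bd_prob \<alpha> \<beta> s (Suc n) * z^(Suc n)" for n
    unfolding eq by (simp add: power_mult_distrib)
  ultimately have "(\<lambda>n. bd_prob \<alpha> \<beta> s (Suc n) * z^(Suc n)) sums ((1 - a) * (1 - b) * z / (1 - b * z))"
    by simp
  then have "(\<lambda>n. bd_prob \<alpha> \<beta> s n * z^n) sums ((1 - a) * (1 - b) * z / (1 - b * z) + a)"
    by (subst (asm) sums_Suc_iff) (simp add: eq)
  moreover have "(1 - a) * (1 - b) * z / (1 - b * z) + a = bd_pgf \<alpha> \<beta> s z"
  proof -
    have ex: "exp (-(\<alpha> - \<beta>) * s) = 1 / E"
    proof -
      have "exp (-(\<alpha> - \<beta>) * s) = exp (-((\<alpha> - \<beta>) * s))" by (simp only: mult_minus_left)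
      also have "\<dots> = inverse E" unfolding E_def by (rule exp_minus)
      finally show ?thesis by (simp add: inverse_eq_divide)
    qed
    show ?thesis
      using alg[OF \<alpha> \<beta> ab(1) z] unfolding bd_pgf_def xi_def ex a_def b_def by simp
  qed
  ultimately show ?thesis by simp
qed

end


lemma set_integral_nonneg_Ici:
  fixes f :: "real \<Rightarrow> real"
  assumes "\<And>t. t \<ge> 0 \<Longrightarrow> f t \<ge> 0"
  shows "(LBINT t:{0..}. f t) \<ge> 0"
  unfolding set_lebesgue_integral_def
  by (rule Bochner_Integration.integral_nonneg) (use assms in \<open>auto simp: indicator_def\<close>)

lemma Y_prob_nonneg:
  assumes \<alpha>: "\<alpha> > \<beta>" and \<beta>: "\<beta> \<ge> 0" and \<delta>: "\<delta> > 0"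
  shows "Y_prob \<alpha> \<beta> \<delta> n \<ge> 0"
  unfolding Y_prob_def using bd_prob_bounds[OF \<alpha> \<beta>] \<delta>
  by (intro set_integral_nonneg_Ici) simp

lemma Y_pgf:
  assumes \<alpha>: "\<alpha> > \<beta>" and \<beta>: "\<beta> \<ge> 0" and \<delta>: "\<delta> > 0" and z: "0 \<le> z" "z < 1"
    and sY: "summable (\<lambda>n. Y_prob \<alpha> \<beta> \<delta> n)"
  shows "(\<lambda>n. Y_prob \<alpha> \<beta> \<delta> n * z^n) sums (LBINT s:{0..}. bd_pgf \<alpha> \<beta> s z * (\<delta> * exp (-\<delta> * s)))"
proof -
  define f where "f n s = z^n * (\<delta> * exp (-\<delta> * s) * bd_prob \<alpha> \<beta> s n)" for n s
  note bb = bd_prob_bounds[OF \<alpha> \<beta>]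
  have fnn: "f n s \<ge> 0" if "s \<ge> 0" for n s unfolding f_def using bb[OF that] z \<delta> by simp
  have J: "set_integrable lborel {0..} (\<lambda>s. \<delta> * exp (-\<delta> * s) * bd_prob \<alpha> \<beta> s n)" for n
  proof -
    have B: "set_integrable lborel {0..} (\<lambda>t. \<delta> * exp (-\<delta> * t))"
      using exp_integral(1)[OF \<delta>] by (intro set_integrable_mult_right) auto
    show ?thesis
    proof (rule set_integrable_bound[OF B])
      show "set_borel_measurable lborel {0..} (\<lambda>s. \<delta> * exp (-\<delta> * s) * bd_prob \<alpha> \<beta> s n)"
        unfolding set_borel_measurable_def bd_prob_def Let_def by measurable
      show "AE t in lborel. t \<in> {0..} \<longrightarrow> norm (\<delta> * exp (-\<delta> * t) * bd_prob \<alpha> \<beta> t n) \<le> norm (\<delta> * exp (-\<delta> * t))"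
      proof (rule AE_I2, rule impI)
        fix t :: real assume "t \<in> {0..}"
        then have "0 \<le> bd_prob \<alpha> \<beta> t n" "bd_prob \<alpha> \<beta> t n \<le> 1" using bb by auto
        then show "norm (\<delta> * exp (-\<delta> * t) * bd_prob \<alpha> \<beta> t n) \<le> norm (\<delta> * exp (-\<delta> * t))"
          using \<delta> by (simp add: abs_mult mult_left_le)
      qed
    qed
  qed
  have I: "set_integrable lborel {0..} (f n)" for n
    unfolding f_def using J by (intro set_integrable_mult_right) auto
  have S: "summable (\<lambda>n. \<bar>f n s\<bar>)" if "s \<ge> 0" for s
  proof -
    have "(\<lambda>n. (\<delta> * exp (-\<delta> * s)) * (bd_prob \<alpha> \<beta> s n * z^n)) sums ((\<delta> * exp (-\<delta> * s)) * bd_pgf \<alpha> \<beta> s z)"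
      by (rule sums_mult[OF bd_sums[OF \<alpha> \<beta> that z]])
    moreover have "\<bar>f n s\<bar> = (\<delta> * exp (-\<delta> * s)) * (bd_prob \<alpha> \<beta> s n * z^n)" for n
      using fnn[OF that, of n] unfolding f_def by (simp add: mult_ac)
    ultimately show ?thesis by (simp add: sums_iff)
  qed
  have F: "(LBINT s:{0..}. f n s) = Y_prob \<alpha> \<beta> \<delta> n * z^n" for n
    unfolding f_def Y_prob_def by (simp add: mult.commute)
  have T: "summable (\<lambda>n. LBINT s:{0..}. \<bar>f n s\<bar>)"
  proof -
    have A: "(LBINT s:{0..}. \<bar>f n s\<bar>) = Y_prob \<alpha> \<beta> \<delta> n * z^n" for n
      unfolding F[symmetric] using fnn by (intro set_lebesgue_integral_cong) auto
    have B: "norm (Y_prob \<alpha> \<beta> \<delta> n * z^n) \<le> Y_prob \<alpha> \<beta> \<delta> n" for n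
    proof -
      have "z^n \<le> 1" using z by (intro power_le_one) auto
      then show ?thesis using Y_prob_nonneg[OF \<alpha> \<beta> \<delta>, of n] z by (simp add: abs_mult mult_left_le)
    qed
    show ?thesis unfolding A by (rule summable_comparison_test'[OF sY B])
  qed
  have sumeq: "(\<Sum>n. f n s) = bd_pgf \<alpha> \<beta> s z * (\<delta> * exp (-\<delta> * s))" if "s \<ge> 0" for s
  proof -
    have "(\<lambda>n. (\<delta> * exp (-\<delta> * s)) * (bd_prob \<alpha> \<beta> s n * z^n)) sums ((\<delta> * exp (-\<delta> * s)) * bd_pgf \<alpha> \<beta> s z)"
      by (rule sums_mult[OF bd_sums[OF \<alpha> \<beta> that z]])
    moreover have "f n s = (\<delta> * exp (-\<delta> * s)) * (bd_prob \<alpha> \<beta> s n * z^n)" for n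
      unfolding f_def by (simp add: mult_ac)
    ultimately show ?thesis by (simp add: sums_iff mult.commute)
  qed
  have "(\<lambda>n. Y_prob \<alpha> \<beta> \<delta> n * z^n) sums (LBINT s:{0..}. (\<Sum>n. f n s))"
    using set_integral_sums[OF I S T] F by simp
  also have "(LBINT s:{0..}. (\<Sum>n. f n s)) = (LBINT s:{0..}. bd_pgf \<alpha> \<beta> s z * (\<delta> * exp (-\<delta> * s)))"
    using sumeq by (intro set_lebesgue_integral_cong) auto
  finally show ?thesis .
qed


context prob_space
begin

lemma nat_rv_sums_prob:
  assumes X: "X \<in> measurable M (count_space UNIV)"
  shows "(\<lambda>n. prob {\<omega>\<in>space M. X \<omega> = (n::nat)}) sums 1"
proof -
  let ?A = "\<lambda>n. {\<omega>\<in>space M. X \<omega> = (n::nat)}"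
  have ev: "?A n \<in> events" for n
  proof -
    have "?A n = X -` {n} \<inter> space M" by auto
    then show ?thesis using measurable_sets[OF X, of "{n}"] by simp
  qed
  then have "range ?A \<subseteq> events" by auto
  moreover have "disjoint_family ?A" by (auto simp: disjoint_family_on_def)
  ultimately have "(\<lambda>n. prob (?A n)) sums prob (\<Union>n. ?A n)" by (rule finite_measure_UNION)
  moreover have "(\<Union>n. ?A n) = space M" by auto
  ultimately show ?thesis using prob_space by simp
qed

lemma nat_rv_pgf:
  assumes X: "X \<in> measurable M (count_space UNIV)" and z: "0 \<le> z" "z \<le> (1::real)"
  shows "(\<lambda>n. prob {\<omega>\<in>space M. X \<omega> = n} * z^n) sums expectation (\<lambda>\<omega>. z ^ X \<omega>)"
proof -
  let ?A = "\<lambda>n. {\<omega>\<in>space M. X \<omega> = (n::nat)}"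
  define f where "f n \<omega> = z^n * indicator (?A n) \<omega>" for n \<omega>
  have ev: "?A n \<in> events" for n
  proof -
    have "?A n = X -` {n} \<inter> space M" by auto
    then show ?thesis using measurable_sets[OF X, of "{n}"] by simp
  qed
  have I: "integrable M (f n)" for n
    unfolding f_def using ev[of n] by (intro integrable_mult_right integrable_real_indicator) (auto simp: less_top[symmetric])
  have int: "expectation (f n) = prob (?A n) * z^n" for n
  proof -
    have "?A n \<inter> space M = ?A n" by auto
    then show ?thesis unfolding f_def by simp
  qed
  have pt: "(\<lambda>n. f n \<omega>) sums (z ^ X \<omega>)" if "\<omega> \<in> space M" for \<omega>
  proof -
    have "(\<lambda>n. if n = X \<omega> then z ^ n else 0) sums (z ^ X \<omega>)" by (rule sums_single)
    moreover have "f n \<omega> = (if n = X \<omega> then z ^ n else 0)" for n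
      unfolding f_def using that by (auto simp: indicator_def)
    ultimately show ?thesis by simp
  qed
  have S: "AE \<omega> in M. summable (\<lambda>n. norm (f n \<omega>))"
  proof (rule AE_I2)
    fix \<omega> assume "\<omega> \<in> space M"
    have "f n \<omega> \<ge> 0" for n unfolding f_def using z by simp
    then have "(\<lambda>n. norm (f n \<omega>)) = (\<lambda>n. f n \<omega>)" by simp
    then show "summable (\<lambda>n. norm (f n \<omega>))" using sums_summable[OF pt[OF \<open>\<omega> \<in> space M\<close>]] by simp
  qed
  have T: "summable (\<lambda>n. \<integral>\<omega>. norm (f n \<omega>) \<partial>M)"
  proof -
    have e: "(\<integral>\<omega>. norm (f n \<omega>) \<partial>M) = prob (?A n) * z^n" for n
    proof -
      have "(\<integral>\<omega>. norm (f n \<omega>) \<partial>M) = expectation (f n)"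
        unfolding f_def using z by (intro Bochner_Integration.integral_cong) (auto simp: indicator_def)
      then show ?thesis using int by simp
    qed
    have B: "norm (prob (?A n) * z^n) \<le> prob (?A n)" for n
    proof -
      have "z^n \<le> 1" using z by (intro power_le_one) auto
      then show ?thesis using z by (simp add: abs_mult mult_left_le)
    qed
    show ?thesis unfolding e
      by (rule summable_comparison_test'[OF sums_summable[OF nat_rv_sums_prob[OF X]] B])
  qed
  have "(\<lambda>n. expectation (f n)) sums (\<integral>\<omega>. (\<Sum>n. f n \<omega>) \<partial>M)"
    by (rule sums_integral[OF I S T])
  also have "(\<integral>\<omega>. (\<Sum>n. f n \<omega>) \<partial>M) = expectation (\<lambda>\<omega>. z ^ X \<omega>)"
    by (rule Bochner_Integration.integral_cong[OF refl]) (rule sums_unique[OF pt, symmetric])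
  finally show ?thesis unfolding int .
qed

end


context prob_space
begin

lemma compound_pgf:
  fixes K :: "'a \<Rightarrow> nat" and Y :: "nat \<Rightarrow> 'a \<Rightarrow> nat" and z G :: real
  assumes K: "K \<in> measurable M (count_space UNIV)"
    and Y: "\<And>i. Y i \<in> measurable M (count_space UNIV)"
    and indep: "indep_vars (\<lambda>_. count_space UNIV) (\<lambda>j. case j of None \<Rightarrow> K | Some i \<Rightarrow> Y i) UNIV"
    and z: "0 \<le> z" "z \<le> 1"
    and G: "\<And>i. expectation (\<lambda>\<omega>. z ^ Y i \<omega>) = G"
  shows "(\<lambda>k. prob {\<omega>\<in>space M. K \<omega> = k} * G^k) sums expectation (\<lambda>\<omega>. z ^ (\<Sum>i\<in>{1..K \<omega>}. Y i \<omega>))"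
proof -
  let ?X = "\<lambda>j. case j of None \<Rightarrow> K | Some i \<Rightarrow> Y i"
  let ?A = "\<lambda>k. {\<omega>\<in>space M. K \<omega> = (k::nat)}"
  define W where "W k j n = (case j of None \<Rightarrow> indicator {k} n | Some i \<Rightarrow> z ^ n)" for k :: nat and j :: "nat option" and n :: nat
  define f where "f k \<omega> = indicator (?A k) \<omega> * (\<Prod>i\<in>{1..k}. z ^ Y i \<omega>)" for k \<omega>
  define Ik where "Ik k = insert None (Some ` {1..k})" for k :: nat
  have ev: "?A n \<in> events" for n
  proof -
    have "?A n = K -` {n} \<inter> space M" by auto
    then show ?thesis using measurable_sets[OF K, of "{n}"] by simp
  qed
  have ind: "indep_vars (\<lambda>_. borel) (\<lambda>j \<omega>. W k j (?X j \<omega>)) (Ik k)" for k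
    by (rule indep_vars_compose2[OF indep_vars_subset[OF indep]]) auto
  have rv: "random_variable borel (\<lambda>\<omega>. W k j (?X j \<omega>))" for k j
    using K Y by (cases j) auto
  have bnd: "\<bar>W k j n\<bar> \<le> 1" for k j n
    unfolding W_def using z by (cases j) (auto intro: power_le_one)
  have intW: "integrable M (\<lambda>\<omega>. W k j (?X j \<omega>))" for k j
    by (rule integrable_const_bound[where B=1]) (use rv bnd in auto)
  have fin: "finite (Ik k)" for k by (simp add: Ik_def)
  have prodeq: "(\<Prod>j\<in>Ik k. W k j (?X j \<omega>)) = f k \<omega>" if "\<omega> \<in> space M" for k \<omega>
  proof -
    have "(\<Prod>j\<in>Ik k. W k j (?X j \<omega>)) = W k None (K \<omega>) * (\<Prod>j\<in>Some ` {1..k}. W k j (?X j \<omega>))"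
      unfolding Ik_def by (subst prod.insert) auto
    also have "(\<Prod>j\<in>Some ` {1..k}. W k j (?X j \<omega>)) = (\<Prod>i\<in>{1..k}. z ^ Y i \<omega>)"
      by (subst prod.reindex) (auto simp: W_def)
    finally show ?thesis unfolding f_def W_def using that by (simp add: indicator_def)
  qed
  have I: "integrable M (f k)" for k
  proof -
    have "integrable M (\<lambda>\<omega>. \<Prod>j\<in>Ik k. W k j (?X j \<omega>))"
      by (rule indep_vars_integrable[OF fin ind intW])
    moreover have "integrable M (\<lambda>\<omega>. \<Prod>j\<in>Ik k. W k j (?X j \<omega>)) = integrable M (f k)"
      by (rule Bochner_Integration.integrable_cong[OF refl]) (rule prodeq)
    ultimately show ?thesis by simp
  qed
  have int: "expectation (f k) = prob (?A k) * G^k" for k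
  proof -
    have "expectation (f k) = expectation (\<lambda>\<omega>. \<Prod>j\<in>Ik k. W k j (?X j \<omega>))"
      by (rule Bochner_Integration.integral_cong[OF refl]) (simp add: prodeq)
    also have "\<dots> = (\<Prod>j\<in>Ik k. expectation (\<lambda>\<omega>. W k j (?X j \<omega>)))"
      by (rule indep_vars_lebesgue_integral[OF fin ind intW])
    also have "\<dots> = expectation (\<lambda>\<omega>. W k None (K \<omega>)) * (\<Prod>j\<in>Some ` {1..k}. expectation (\<lambda>\<omega>. W k j (?X j \<omega>)))"
      unfolding Ik_def by (subst prod.insert) auto
    also have "(\<Prod>j\<in>Some ` {1..k}. expectation (\<lambda>\<omega>. W k j (?X j \<omega>))) = G^k"
      by (subst prod.reindex) (auto simp: W_def G)
    also have "expectation (\<lambda>\<omega>. W k None (K \<omega>)) = prob (?A k)"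
    proof -
      have "expectation (\<lambda>\<omega>. W k None (K \<omega>)) = expectation (indicator (?A k))"
        by (rule Bochner_Integration.integral_cong[OF refl]) (simp add: W_def indicator_def)
      also have "\<dots> = prob (?A k)"
      proof -
        have "?A k \<inter> space M = ?A k" by auto
        then show ?thesis by simp
      qed
      finally show ?thesis .
    qed
    finally show ?thesis .
  qed
  have fnn: "f k \<omega> \<ge> 0" for k \<omega> unfolding f_def using z by (simp add: prod_nonneg)
  have pt: "(\<lambda>k. f k \<omega>) sums (z ^ (\<Sum>i\<in>{1..K \<omega>}. Y i \<omega>))" if "\<omega> \<in> space M" for \<omega>
  proof -
    have "(\<lambda>k. if k = K \<omega> then (\<Prod>i\<in>{1..k}. z ^ Y i \<omega>) else 0) sums (\<Prod>i\<in>{1..K \<omega>}. z ^ Y i \<omega>)"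
      by (rule sums_single)
    moreover have "f k \<omega> = (if k = K \<omega> then (\<Prod>i\<in>{1..k}. z ^ Y i \<omega>) else 0)" for k
      unfolding f_def using that by (auto simp: indicator_def)
    ultimately show ?thesis by (simp add: power_sum)
  qed
  have S: "AE \<omega> in M. summable (\<lambda>n. norm (f n \<omega>))"
  proof (rule AE_I2)
    fix \<omega> assume "\<omega> \<in> space M"
    have "(\<lambda>n. norm (f n \<omega>)) = (\<lambda>n. f n \<omega>)" using fnn by simp
    then show "summable (\<lambda>n. norm (f n \<omega>))" using sums_summable[OF pt[OF \<open>\<omega> \<in> space M\<close>]] by simp
  qed
  have G01: "0 \<le> G" "G \<le> 1"
  proof -
    have "0 \<le> expectation (\<lambda>\<omega>. z ^ Y 0 \<omega>)" using z by simp
    then show "0 \<le> G" using G by simp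
    have "expectation (\<lambda>\<omega>. z ^ Y 0 \<omega>) \<le> expectation (\<lambda>\<omega>. 1)"
      by (rule integral_mono) (use intW[of 0 "Some 0"] z in \<open>auto simp: W_def intro: power_le_one\<close>)
    then show "G \<le> 1" using G prob_space by simp
  qed
  have T: "summable (\<lambda>n. \<integral>\<omega>. norm (f n \<omega>) \<partial>M)"
  proof -
    have e: "(\<integral>\<omega>. norm (f n \<omega>) \<partial>M) = prob (?A n) * G^n" for n
    proof -
      have "(\<integral>\<omega>. norm (f n \<omega>) \<partial>M) = expectation (f n)"
        by (rule Bochner_Integration.integral_cong[OF refl]) (use fnn in simp)
      then show ?thesis using int by simp
    qed
    have B: "norm (prob (?A n) * G^n) \<le> prob (?A n)" for n
    proof -
      have "G^n \<le> 1" using G01 by (intro power_le_one) auto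
      then show ?thesis using G01 by (simp add: abs_mult mult_left_le)
    qed
    show ?thesis unfolding e
      by (rule summable_comparison_test'[OF sums_summable[OF nat_rv_sums_prob[OF K]] B])
  qed
  have "(\<lambda>n. expectation (f n)) sums (\<integral>\<omega>. (\<Sum>n. f n \<omega>) \<partial>M)"
    by (rule sums_integral[OF I S T])
  also have "(\<integral>\<omega>. (\<Sum>n. f n \<omega>) \<partial>M) = expectation (\<lambda>\<omega>. z ^ (\<Sum>i\<in>{1..K \<omega>}. Y i \<omega>))"
    by (rule Bochner_Integration.integral_cong[OF refl]) (rule sums_unique[OF pt, symmetric])
  finally show ?thesis unfolding int .
qed

end


lemma powser_zero_coeffs:
  fixes c :: "nat \<Rightarrow> real"
  assumes B: "\<And>n. \<bar>c n\<bar> \<le> 2"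
    and Z: "\<And>z. 0 < z \<Longrightarrow> z < 1 \<Longrightarrow> (\<lambda>n. c n * z^n) sums 0"
  shows "c m = 0"
proof (induction m rule: less_induct)
  case (less m)
  define g where "g x = (\<Sum>n. c (n + m) * x^n)" for x :: real
  have summ: "summable (\<lambda>n. c (n + m) * x^n)" if "\<bar>x\<bar> < 1" for x
  proof (rule summable_comparison_test'[where g="\<lambda>n. 2 * \<bar>x\<bar>^n"])
    show "summable (\<lambda>n. 2 * \<bar>x\<bar>^n)" using that by (intro summable_mult summable_geometric) simp
    show "norm (c (n + m) * x^n) \<le> 2 * \<bar>x\<bar>^n" for n
      using B[of "n+m"] by (simp add: abs_mult power_abs mult_right_mono)
  qed
  have cont: "isCont g 0"
    unfolding g_def by (rule isCont_powser[OF summ[of "1/2"]]) auto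
  have g0: "g 0 = c m" unfolding g_def using powser_zero[of "\<lambda>n. c (n + m)"] by simp
  have gz: "g z = 0" if "0 < z" "z < 1" for z
  proof -
    have "(\<lambda>n. c (n + m) * z^(n + m)) sums (0 - (\<Sum>i<m. c i * z^i))"
      using Z[OF that] by (subst sums_iff_shift) simp
    moreover have "(\<Sum>i<m. c i * z^i) = 0" using less.IH by simp
    ultimately have "(\<lambda>n. c (n + m) * z^(n + m)) sums 0" by simp
    then have "(\<lambda>n. (1 / z^m) * (c (n + m) * z^(n + m))) sums ((1/z^m) * 0)" by (rule sums_mult)
    moreover have "(1 / z^m) * (c (n + m) * z^(n + m)) = c (n + m) * z^n" for n
      using that by (simp add: power_add)
    ultimately have "(\<lambda>n. c (n + m) * z^n) sums 0" by simp
    then show ?thesis unfolding g_def by (simp add: sums_iff)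
  qed
  have "(g \<longlongrightarrow> g 0) (at_right 0)"
    using cont by (simp add: isCont_def filterlim_at_split)
  moreover have "(g \<longlongrightarrow> 0) (at_right 0)"
  proof (rule tendsto_eventually)
    show "eventually (\<lambda>x. g x = 0) (at_right 0)"
      unfolding eventually_at_right_field by (rule exI[of _ 1]) (auto intro: gz)
  qed
  ultimately have "g 0 = 0" using tendsto_unique[OF trivial_limit_at_right_real] by blast
  then show ?case using g0 by simp
qed

lemma powser_unique_prob:
  fixes a b :: "nat \<Rightarrow> real"
  assumes A: "\<And>n. 0 \<le> a n" "\<And>n. a n \<le> 1" and Bb: "\<And>n. 0 \<le> b n" "\<And>n. b n \<le> 1"
    and E: "\<And>z. 0 < z \<Longrightarrow> z < 1 \<Longrightarrow> \<exists>s. (\<lambda>n. a n * z^n) sums s \<and> (\<lambda>n. b n * z^n) sums s"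
  shows "a m = b m"
proof -
  have "(\<lambda>n. a n - b n) m = 0"
  proof (rule powser_zero_coeffs)
    show "\<bar>a n - b n\<bar> \<le> 2" for n using A[of n] Bb[of n] by linarith
    fix z :: real assume "0 < z" "z < 1"
    then obtain s where "(\<lambda>n. a n * z^n) sums s" "(\<lambda>n. b n * z^n) sums s" using E by blast
    from sums_diff[OF this] show "(\<lambda>n. (a n - b n) * z^n) sums 0" by (simp add: left_diff_distrib)
  qed
  then show ?thesis by simp
qed


theorem mainTheorem8:
  fixes \<alpha> \<beta> \<delta> \<theta> :: real
    and M :: "'a measure" and V :: "'a \<Rightarrow> nat"
    and N :: "'b measure" and K :: "'b \<Rightarrow> nat" and Y :: "nat \<Rightarrow> 'b \<Rightarrow> nat"
  defines "lam \<equiv> \<alpha> - \<beta>"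
  defines "q \<equiv> \<beta> / \<alpha>"
  defines "\<gamma> \<equiv> \<delta> / lam"
  assumes \<delta>_pos: "\<delta> > 0" and \<beta>_nonneg: "\<beta> \<ge> 0" and \<alpha>_gt: "\<alpha> > \<beta>" and \<theta>_pos: "\<theta> > 0"
  assumes M: "prob_space M"
    and V_meas: "V \<in> measurable M (count_space UNIV)"
    and V_pgf: "\<forall>z\<in>{0..<1::real}.
       ln (prob_space.expectation M (\<lambda>\<omega>. z ^ V \<omega>)) = - (\<theta> / \<gamma>) * hyp2F1 1 \<gamma> (1 + \<gamma>) (xi q z)"
  assumes N: "prob_space N"
    and K_meas: "K \<in> measurable N (count_space UNIV)"
    and Y_meas: "\<And>i. Y i \<in> measurable N (count_space UNIV)"
    and indep: "prob_space.indep_vars N (\<lambda>_. count_space UNIV)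
                  (\<lambda>j. case j of None \<Rightarrow> K | Some i \<Rightarrow> Y i) UNIV"
    and K_poisson: "\<And>k. measure N {\<omega>\<in>space N. K \<omega> = k} =
                  (\<theta> / ((1 - q) * \<gamma>)) ^ k / fact k * exp (- (\<theta> / ((1 - q) * \<gamma>)))"
    and Y_law: "\<And>i n. measure N {\<omega>\<in>space N. Y i \<omega> = n} = Y_prob \<alpha> \<beta> \<delta> n"
  shows "distr M (count_space UNIV) V = distr N (count_space UNIV) (\<lambda>\<omega>. \<Sum>i\<in>{1..K \<omega>}. Y i \<omega>)
    \<and> (\<forall>z\<in>{0..<1::real}.
         (LBINT t:{0..}. bd_pgf \<alpha> \<beta> t z * (\<delta> * exp (-\<delta> * t)))
           = 1 - (1 - q) * hyp2F1 1 \<gamma> (1 + \<gamma>) (xi q z))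
    \<and> (\<forall>z\<in>{0..<1::real}.
         ln (prob_space.expectation M (\<lambda>\<omega>. z ^ V \<omega>))
           = \<theta> / ((1 - q) * \<gamma>) * (LBINT t:{0..}. (bd_pgf \<alpha> \<beta> t z - 1) * (\<delta> * exp (-\<delta> * t))))"
proof -
  interpret PM: prob_space M by (rule M)
  interpret PN: prob_space N by (rule N)
  have a0: "\<alpha> > 0" using \<alpha>_gt \<beta>_nonneg by simp
  have q1: "1 - q > 0" unfolding q_def using \<alpha>_gt a0 by (simp add: field_simps)
  have g0: "\<gamma> > 0" unfolding \<gamma>_def lam_def using \<delta>_pos \<alpha>_gt by simp
  define F where "F z = hyp2F1 1 \<gamma> (1 + \<gamma>) (xi q z)" for z
  define \<mu> where "\<mu> = \<theta> / ((1 - q) * \<gamma>)"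
  note c2 = claim2[OF \<delta>_pos \<beta>_nonneg \<alpha>_gt, folded lam_def q_def, folded \<gamma>_def]
  have C2: "(LBINT t:{0..}. bd_pgf \<alpha> \<beta> t z * (\<delta> * exp (-\<delta> * t))) = 1 - (1 - q) * F z"
    if "0 \<le> z" "z < 1" for z
    using c2(2)[OF that] unfolding F_def .
  have eI: "set_integrable lborel {0..} (\<lambda>t. \<delta> * exp (-\<delta> * t))"
    using exp_integral(1)[OF \<delta>_pos] by (intro set_integrable_mult_right) auto
  have eV: "(LBINT t:{0..}. \<delta> * exp (-\<delta> * t)) = 1"
    using exp_integral(2)[OF \<delta>_pos] \<delta>_pos by simp
  have part3: "ln (PM.expectation (\<lambda>\<omega>. z ^ V \<omega>))
           = \<theta> / ((1 - q) * \<gamma>) * (LBINT t:{0..}. (bd_pgf \<alpha> \<beta> t z - 1) * (\<delta> * exp (-\<delta> * t)))"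
    if z: "0 \<le> z" "z < 1" for z
  proof -
    have "(LBINT t:{0..}. (bd_pgf \<alpha> \<beta> t z - 1) * (\<delta> * exp (-\<delta> * t)))
        = (LBINT t:{0..}. bd_pgf \<alpha> \<beta> t z * (\<delta> * exp (-\<delta> * t)) - \<delta> * exp (-\<delta> * t))"
      by (simp add: left_diff_distrib)
    also have "\<dots> = (LBINT t:{0..}. bd_pgf \<alpha> \<beta> t z * (\<delta> * exp (-\<delta> * t))) - (LBINT t:{0..}. \<delta> * exp (-\<delta> * t))"
      by (rule set_integral_diff(2)[OF c2(1)[OF z] eI])
    also have "\<dots> = - (1 - q) * F z" unfolding C2[OF z] eV by (simp add: algebra_simps)
    finally have L: "(LBINT t:{0..}. (bd_pgf \<alpha> \<beta> t z - 1) * (\<delta> * exp (-\<delta> * t))) = - (1 - q) * F z" .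
    have "\<theta> / ((1 - q) * \<gamma>) * (- (1 - q) * F z) = - (\<theta> / \<gamma>) * F z"
      using q1 g0 by (simp add: field_simps)
    then show ?thesis unfolding L using V_pgf z unfolding F_def by simp
  qed
  define S where "S \<omega> = (\<Sum>i\<in>{1..K \<omega>}. Y i \<omega>)" for \<omega>
  have S_meas: "S \<in> measurable N (count_space UNIV)"
    unfolding S_def using K_meas Y_meas by measurable
  have sY: "summable (\<lambda>n. Y_prob \<alpha> \<beta> \<delta> n)"
    using sums_summable[OF PN.nat_rv_sums_prob[OF Y_meas[of 0]]] unfolding Y_law .
  have pgf_eq: "\<exists>s. (\<lambda>n. PM.prob {\<omega>\<in>space M. V \<omega> = n} * z^n) sums s \<and> (\<lambda>n. PN.prob {\<omega>\<in>space N. S \<omega> = n} * z^n) sums s"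
    if z: "0 < z" "z < 1" for z
  proof -
    have z': "0 \<le> z" "z \<le> 1" using z by auto
    define G where "G = 1 - (1 - q) * F z"
    have YG: "PN.expectation (\<lambda>\<omega>. z ^ Y i \<omega>) = G" for i
    proof -
      have "(\<lambda>n. Y_prob \<alpha> \<beta> \<delta> n * z^n) sums PN.expectation (\<lambda>\<omega>. z ^ Y i \<omega>)"
        using PN.nat_rv_pgf[OF Y_meas z'] unfolding Y_law .
      moreover have "(\<lambda>n. Y_prob \<alpha> \<beta> \<delta> n * z^n) sums G"
        using Y_pgf[OF \<alpha>_gt \<beta>_nonneg \<delta>_pos z'(1) z(2) sY] C2[OF z'(1) z(2)] unfolding G_def by simp
      ultimately show ?thesis by (rule sums_unique2)
    qed
    have cp: "(\<lambda>k. PN.prob {\<omega>\<in>space N. K \<omega> = k} * G^k) sums PN.expectation (\<lambda>\<omega>. z ^ S \<omega>)"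
      using PN.compound_pgf[OF K_meas Y_meas indep z' YG] unfolding S_def .
    have "(\<lambda>k. exp (-\<mu>) * ((\<mu> * G)^k /\<^sub>R fact k)) sums (exp (-\<mu>) * exp (\<mu> * G))"
      by (rule sums_mult[OF exp_converges])
    moreover have "exp (-\<mu>) * ((\<mu> * G)^k /\<^sub>R fact k) = PN.prob {\<omega>\<in>space N. K \<omega> = k} * G^k" for k
      unfolding K_poisson \<mu>_def[symmetric] by (simp add: power_mult_distrib field_simps)
    ultimately have "(\<lambda>k. PN.prob {\<omega>\<in>space N. K \<omega> = k} * G^k) sums (exp (-\<mu>) * exp (\<mu> * G))" by simp
    then have ES: "PN.expectation (\<lambda>\<omega>. z ^ S \<omega>) = exp (- (\<theta> / \<gamma>) * F z)"
    proof -
      assume "(\<lambda>k. PN.prob {\<omega>\<in>space N. K \<omega> = k} * G^k) sums (exp (-\<mu>) * exp (\<mu> * G))"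
      then have "PN.expectation (\<lambda>\<omega>. z ^ S \<omega>) = exp (-\<mu>) * exp (\<mu> * G)"
        using cp by (simp add: sums_iff)
      also have "\<dots> = exp (-\<mu> + \<mu> * G)" by (rule exp_add[symmetric])
      also have "-\<mu> + \<mu> * G = - (\<theta> / \<gamma>) * F z"
      proof -
        have 1: "-\<mu> + \<mu> * G = - (\<mu> * (1 - q)) * F z" unfolding G_def by (simp add: algebra_simps)
        have 2: "\<mu> * (1 - q) = \<theta> / \<gamma>" unfolding \<mu>_def using q1 g0 by simp
        show ?thesis unfolding 1 2 ..
      qed
      finally show ?thesis .
    qed
    have pV: "(\<lambda>n. PM.prob {\<omega>\<in>space M. V \<omega> = n} * z^n) sums PM.expectation (\<lambda>\<omega>. z ^ V \<omega>)"
      by (rule PM.nat_rv_pgf[OF V_meas z'])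
    have Epos: "PM.expectation (\<lambda>\<omega>. z ^ V \<omega>) > 0"
    proof -
      have "\<exists>i. PM.prob {\<omega>\<in>space M. V \<omega> = i} > 0"
      proof (rule ccontr)
        assume "\<not> (\<exists>i. PM.prob {\<omega>\<in>space M. V \<omega> = i} > 0)"
        then have "PM.prob {\<omega>\<in>space M. V \<omega> = i} = 0" for i
          using measure_nonneg[of M "{\<omega>\<in>space M. V \<omega> = i}"] by (meson not_less order.antisym)
        then show False using PM.nat_rv_sums_prob[OF V_meas] by (simp add: sums_iff)
      qed
      then obtain i where i: "PM.prob {\<omega>\<in>space M. V \<omega> = i} > 0" by blast
      have "0 < (\<Sum>n. PM.prob {\<omega>\<in>space M. V \<omega> = n} * z^n)"
        by (rule suminf_pos2[OF sums_summable[OF pV], of i]) (use i z in auto)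
      then show ?thesis using pV by (simp add: sums_iff)
    qed
    have EV: "PM.expectation (\<lambda>\<omega>. z ^ V \<omega>) = exp (- (\<theta> / \<gamma>) * F z)"
    proof -
      have "ln (PM.expectation (\<lambda>\<omega>. z ^ V \<omega>)) = - (\<theta> / \<gamma>) * F z"
        using V_pgf z unfolding F_def by simp
      then show ?thesis using Epos by (metis exp_ln)
    qed
    show ?thesis using pV PN.nat_rv_pgf[OF S_meas z'] unfolding EV ES by blast
  qed
  have probeq: "PM.prob {\<omega>\<in>space M. V \<omega> = n} = PN.prob {\<omega>\<in>space N. S \<omega> = n}" for n
    by (rule powser_unique_prob[OF _ _ _ _ pgf_eq]) auto
  have part1: "distr M (count_space UNIV) V = distr N (count_space UNIV) S"
  proof (rule measure_eqI_countable[where A=UNIV])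
    fix n :: nat
    have "emeasure (distr M (count_space UNIV) V) {n} = emeasure M {\<omega>\<in>space M. V \<omega> = n}"
      using V_meas by (subst emeasure_distr) (auto intro!: arg_cong[where f="emeasure M"])
    also have "\<dots> = ennreal (PM.prob {\<omega>\<in>space M. V \<omega> = n})"
      by (rule PM.emeasure_eq_measure)
    also have "\<dots> = ennreal (PN.prob {\<omega>\<in>space N. S \<omega> = n})" by (simp add: probeq)
    also have "\<dots> = emeasure N {\<omega>\<in>space N. S \<omega> = n}"
      by (rule PN.emeasure_eq_measure[symmetric])
    also have "\<dots> = emeasure (distr N (count_space UNIV) S) {n}"
      using S_meas by (subst emeasure_distr) (auto intro!: arg_cong[where f="emeasure N"])
    finally show "emeasure (distr M (count_space UNIV) V) {n} = emeasure (distr N (count_space UNIV) S) {n}" .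
  qed auto
  show ?thesis
    using part1 C2 part3 unfolding S_def F_def by auto
qed


end
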